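(* Let $\Lambda=K\mathcal{Q}/I$ be a finite-dimensional algebra over a field $K$ as in the context, let $A\geqslant1$ and let $\tilde{\Lambda}=\tilde{\Lambda}_A$ be its stretched algebra. Let $w$ be a vertex of $\tilde{\mathcal{Q}}_A$ not in $\mathcal{Q}_0$, let $v=\mathfrak{o}(\tilde{p}_w)$ and $v'=\mathfrak{t}(\tilde{q}_w)$, and let $\tilde\lambda\in\tilde{\Lambda}$. Then: (1) if $0\neq\tilde\lambda v\in\tilde{\Lambda}v$, then $\tilde\lambda\tilde{p}_w\neq0$ in $\tilde{\Lambda}$; (2) if $0\neq v'\tilde\lambda\in v'\tilde{\Lambda}$, then $\tilde{q}_w\tilde\lambda\neq0$ in $\tilde{\Lambda}$.
   Context: Conventions: $\mathcal{Q}$ is a finite quiver with vertex set $\mathcal{Q}_0$; $\mathfrak{o}(\alpha)$, $\mathfrak{t}(\alpha)$ denote start and end of an arrow or path; paths are written left to right. An element $x\in K\mathcal{Q}$ is uniform if $x=vx=xv'$ for vertices $v,v'$. $\Lambda=K\mathcal{Q}/I$ is finite-dimensional with $I$ an admissible ideal generated by a minimal set $\{g^2_1,\dots,g^2_m\}$ of uniform elements. Stretched algebra: for $A\geqslant1$, the quiver $\tilde{\mathcal{Q}}_A$ has all vertices of $\mathcal{Q}$ plus, for each arrow $\alpha$ of $\mathcal{Q}$, new vertices $w_1,\dots,w_{A-1}$; each arrow $\alpha$ is replaced by arrows $\alpha_1,\dots,\alpha_A$ with $\mathfrak{o}(\alpha_1)=\mathfrak{o}(\alpha)$, $\mathfrak{t}(\alpha_j)=\mathfrak{o}(\alpha_{j+1})=w_j$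 ($1\le j\le A-1$), $\mathfrak{t}(\alpha_A)=\mathfrak{t}(\alpha)$, and the only arrows incident with $w_j$ are $\alpha_j,\alpha_{j+1}$. $\theta^*:K\mathcal{Q}\to K\tilde{\mathcal{Q}}_A$ is the algebra homomorphism fixing vertices and sending $\alpha\mapsto\alpha_1\cdots\alpha_A$; $\tilde{I}_A$ is the ideal generated by $\theta^*(g^2_1),\dots,\theta^*(g^2_m)$; $\tilde{\Lambda}_A=K\tilde{\mathcal{Q}}_A/\tilde{I}_A$. For a new vertex $w=w_i$ on the path replacing the arrow $\alpha$, $\tilde{p}_w=\alpha_1\cdots\alpha_i$ (the unique shortest path from a vertex of $\mathcal{Q}_0$ to $w$) and $\tilde{q}_w=\alpha_{i+1}\cdots\alpha_A$ (the unique shortest path from $w$ to a vertex of $\mathcal{Q}_0$), viewed in $\tilde{\Lambda}$; thus $\mathfrak{o}(\tilde{p}_w)=\mathfrak{o}(\alpha)$, $\mathfrak{t}(\tilde{q}_w)=\mathfrak{t}(\alpha)$. *)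

theory Defs
  imports Main
begin

record ('v, 'e) quiver =
  verts :: "'v set"
  arrs  :: "'e set"
  src   :: "'e \<Rightarrow> 'v"
  tgt   :: "'e \<Rightarrow> 'v"

definition finite_quiver :: "('v, 'e) quiver \<Rightarrow> bool" where
  "finite_quiver Q \<longleftrightarrow> finite (verts Q) \<and> finite (arrs Q) \<and>
     (\<forall>a\<in>arrs Q. src Q a \<in> verts Q \<and> tgt Q a \<in> verts Q)"

text \<open>A path is a start vertex together with a (possibly empty) list of arrows,
  composed left to right; the empty list gives the trivial path at the vertex.\<close>
type_synonym ('v, 'e) qpath = "'v \<times> 'e list"

definition is_path :: "('v, 'e) quiver \<Rightarrow> ('v, 'e) qpath \<Rightarrow> bool" where
  "is_path Q p \<longleftrightarrow> fst p \<in> verts Q \<and> set (snd p) \<subseteq> arrs Q \<and>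
     (snd p \<noteq> [] \<longrightarrow> src Q (hd (snd p)) = fst p) \<and>
     (\<forall>i. Suc i < length (snd p) \<longrightarrow> tgt Q (snd p ! i) = src Q (snd p ! Suc i))"

definition path_end :: "('v, 'e) quiver \<Rightarrow> ('v, 'e) qpath \<Rightarrow> 'v" where
  "path_end Q p = (if snd p = [] then fst p else tgt Q (last (snd p)))"

type_synonym ('v, 'e, 'k) pelem = "('v, 'e) qpath \<Rightarrow> 'k"

definition pa_carrier :: "('v, 'e) quiver \<Rightarrow> ('v, 'e, 'k::field) pelem set" where
  "pa_carrier Q = {x. finite {p. x p \<noteq> 0} \<and> (\<forall>p. x p \<noteq> 0 \<longrightarrow> is_path Q p)}"

definition pa_add :: "('v, 'e, 'k::field) pelem \<Rightarrow> ('v, 'e, 'k) pelem \<Rightarrow> ('v, 'e, 'k) pelem" where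
  "pa_add x y = (\<lambda>p. x p + y p)"

definition pa_smult :: "'k::field \<Rightarrow> ('v, 'e, 'k) pelem \<Rightarrow> ('v, 'e, 'k) pelem" where
  "pa_smult c x = (\<lambda>p. c * x p)"

definition pa_zero :: "('v, 'e, 'k::field) pelem" where
  "pa_zero = (\<lambda>p. 0)"

text \<open>Multiplication: concatenation of paths (left to right), zero if not composable.\<close>
definition pa_mult :: "('v, 'e) quiver \<Rightarrow> ('v, 'e, 'k::field) pelem \<Rightarrow> ('v, 'e, 'k) pelem
    \<Rightarrow> ('v, 'e, 'k) pelem" where
  "pa_mult Q x y = (\<lambda>p. \<Sum>i\<le>length (snd p).
      x (fst p, take i (snd p)) * y (path_end Q (fst p, take i (snd p)), drop i (snd p)))"

definition pa_path :: "('v, 'e) qpath \<Rightarrow> ('v, 'e, 'k::field) pelem" where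
  "pa_path p = (\<lambda>q. if q = p then 1 else 0)"

definition pa_vtx :: "'v \<Rightarrow> ('v, 'e, 'k::field) pelem" where
  "pa_vtx v = pa_path (v, [])"

inductive_set gen_ideal :: "('v, 'e) quiver \<Rightarrow> ('v, 'e, 'k::field) pelem set
    \<Rightarrow> ('v, 'e, 'k) pelem set" for Q S where
  gen: "s \<in> S \<Longrightarrow> s \<in> gen_ideal Q S"
| zero: "pa_zero \<in> gen_ideal Q S"
| add: "a \<in> gen_ideal Q S \<Longrightarrow> b \<in> gen_ideal Q S \<Longrightarrow> pa_add a b \<in> gen_ideal Q S"
| smult: "a \<in> gen_ideal Q S \<Longrightarrow> pa_smult c a \<in> gen_ideal Q S"
| mult: "a \<in> gen_ideal Q S \<Longrightarrow> x \<in> pa_carrier Q \<Longrightarrow> y \<in> pa_carrier Q \<Longrightarrow>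
          pa_mult Q (pa_mult Q x a) y \<in> gen_ideal Q S"

definition uniform :: "('v, 'e) quiver \<Rightarrow> ('v, 'e, 'k::field) pelem \<Rightarrow> bool" where
  "uniform Q x \<longleftrightarrow> (\<exists>v\<in>verts Q. \<exists>v'\<in>verts Q.
      x = pa_mult Q (pa_vtx v) x \<and> x = pa_mult Q x (pa_vtx v'))"

text \<open>Admissible: R^N \<subseteq> I \<subseteq> R^2 for some N \<ge> 2, R the arrow ideal.\<close>
definition admissible :: "('v, 'e) quiver \<Rightarrow> ('v, 'e, 'k::field) pelem set \<Rightarrow> bool" where
  "admissible Q I \<longleftrightarrow> I \<subseteq> pa_carrier Q \<and>
     (\<exists>N\<ge>2. \<forall>p. is_path Q p \<and> length (snd p) \<ge> N \<longrightarrow> pa_path p \<in> I) \<and>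
     (\<forall>x\<in>I. \<forall>p. length (snd p) < 2 \<longrightarrow> x p = 0)"

definition fin_dim_quot :: "('v, 'e) quiver \<Rightarrow> ('v, 'e, 'k::field) pelem set \<Rightarrow> bool" where
  "fin_dim_quot Q I \<longleftrightarrow> (\<exists>F. finite F \<and> F \<subseteq> pa_carrier Q \<and>
     (\<forall>x\<in>pa_carrier Q. \<exists>c. (\<lambda>p. x p - (\<Sum>f\<in>F. c f * f p)) \<in> I))"

definition minimal_uniform_gens :: "('v, 'e) quiver \<Rightarrow> ('v, 'e, 'k::field) pelem set
    \<Rightarrow> ('v, 'e, 'k) pelem set \<Rightarrow> bool" where
  "minimal_uniform_gens Q G I \<longleftrightarrow> finite G \<and> G \<subseteq> pa_carrier Q \<and>
     (\<forall>g\<in>G. uniform Q g) \<and> I = gen_ideal Q G \<and> (\<forall>g\<in>G. gen_ideal Q (G - {g}) \<noteq> I)"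

datatype ('v, 'e) svert = Old 'v | New 'e nat

text \<open>Arrow \<alpha> is replaced by arrows (\<alpha>,1),...,(\<alpha>,A); New \<alpha> j is w_j on the path replacing \<alpha>.\<close>
definition stretched_quiver :: "('v, 'e) quiver \<Rightarrow> nat \<Rightarrow> (('v, 'e) svert, 'e \<times> nat) quiver" where
  "stretched_quiver Q A =
     \<lparr> verts = Old ` verts Q \<union> {New a j | a j. a \<in> arrs Q \<and> 1 \<le> j \<and> j \<le> A - 1},
       arrs = {(a, j) | a j. a \<in> arrs Q \<and> 1 \<le> j \<and> j \<le> A},
       src = (\<lambda>(a, j). if j = 1 then Old (src Q a) else New a (j - 1)),
       tgt = (\<lambda>(a, j). if j = A then Old (tgt Q a) else New a j) \<rparr>"

definition stretch_arr :: "nat \<Rightarrow> 'e \<Rightarrow> ('e \<times> nat) list" where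
  "stretch_arr A a = map (\<lambda>j. (a, j)) [1..<A+1]"

definition stretch_path :: "nat \<Rightarrow> ('v, 'e) qpath \<Rightarrow> (('v, 'e) svert, 'e \<times> nat) qpath" where
  "stretch_path A p = (Old (fst p), concat (map (stretch_arr A) (snd p)))"

text \<open>theta*: the algebra homomorphism fixing vertices and sending \<alpha> to \<alpha>_1...\<alpha>_A,
  written out on the path basis.\<close>
definition theta :: "('v, 'e) quiver \<Rightarrow> nat \<Rightarrow> ('v, 'e, 'k::field) pelem
    \<Rightarrow> (('v, 'e) svert, 'e \<times> nat, 'k) pelem" where
  "theta Q A x = (\<lambda>q. \<Sum>p\<in>{p. is_path Q p \<and> stretch_path A p = q}. x p)"

definition stretched_ideal :: "('v, 'e) quiver \<Rightarrow> nat \<Rightarrow> ('v, 'e, 'k::field) pelem set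
    \<Rightarrow> (('v, 'e) svert, 'e \<times> nat, 'k) pelem set" where
  "stretched_ideal Q A G = gen_ideal (stretched_quiver Q A) (theta Q A ` G)"

fun ptil :: "('v, 'e) quiver \<Rightarrow> nat \<Rightarrow> ('v, 'e) svert \<Rightarrow> (('v, 'e) svert, 'e \<times> nat) qpath" where
  "ptil Q A (New a i) = (Old (src Q a), map (\<lambda>j. (a, j)) [1..<i+1])"
| "ptil Q A (Old v) = (Old v, [])"

fun qtil :: "('v, 'e) quiver \<Rightarrow> nat \<Rightarrow> ('v, 'e) svert \<Rightarrow> (('v, 'e) svert, 'e \<times> nat) qpath" where
  "qtil Q A (New a i) = (New a i, map (\<lambda>j. (a, j)) [i+1..<A+1])"
| "qtil Q A (Old v) = (Old v, [])"

end

theory Submission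
  imports Defs
begin

lemma sum_split_le_lt:
  "(\<Sum>k\<le>n+m. f k) = (\<Sum>k\<le>n. f k) + (\<Sum>k<m. f (n + Suc k))" for f :: "nat \<Rightarrow> 'a::comm_monoid_add"
  by (induction m) (auto simp: add.assoc)

lemma sum_split_lt_le:
  "(\<Sum>k\<le>n+m. f k) = (\<Sum>k<n. f k) + (\<Sum>k\<le>m. f (n + k))" for f :: "nat \<Rightarrow> 'a::comm_monoid_add"
  by (induction m) (auto simp: add.assoc lessThan_Suc_atMost[symmetric] add_Suc_right)

definition rstrip :: "'e list \<Rightarrow> ('v, 'e, 'k::field) pelem \<Rightarrow> ('v, 'e, 'k) pelem" where
  "rstrip t f = (\<lambda>r. f (fst r, snd r @ t))"

definition lstrip :: "'v \<Rightarrow> 'v \<Rightarrow> 'e list \<Rightarrow> ('v, 'e, 'k::field) pelem \<Rightarrow> ('v, 'e, 'k) pelem" where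
  "lstrip V s0 u f = (\<lambda>r. if fst r = V then f (s0, u @ snd r) else 0)"

lemma last_take_Suc: "m < length t \<Longrightarrow> last (take (Suc m) t) = t ! m"
  by (subst last_conv_nth) (auto simp: min_def intro: arg_cong[where f="(!) t"])

lemma R1:
  "pa_mult Q F y (s, l @ t) = pa_mult Q F (rstrip t y) (s, l)
     + (\<Sum>m<length t. F (s, l @ take (Suc m) t) * y (tgt Q (t ! m), drop (Suc m) t))"
proof -
  have "pa_mult Q F y (s, l @ t) = (\<Sum>k\<le>length l + length t.
      F (s, take k (l @ t)) * y (path_end Q (s, take k (l @ t)), drop k (l @ t)))"
    by (simp add: pa_mult_def)
  also have "\<dots> = (\<Sum>k\<le>length l. F (s, take k (l @ t)) * y (path_end Q (s, take k (l @ t)), drop k (l @ t)))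
     + (\<Sum>m<length t. F (s, take (length l + Suc m) (l @ t)) * y (path_end Q (s, take (length l + Suc m) (l @ t)), drop (length l + Suc m) (l @ t)))"
    by (rule sum_split_le_lt)
  also have "(\<Sum>k\<le>length l. F (s, take k (l @ t)) * y (path_end Q (s, take k (l @ t)), drop k (l @ t)))
     = pa_mult Q F (rstrip t y) (s, l)"
    unfolding pa_mult_def rstrip_def by (rule sum.cong) auto
  also have "(\<Sum>m<length t. F (s, take (length l + Suc m) (l @ t)) * y (path_end Q (s, take (length l + Suc m) (l @ t)), drop (length l + Suc m) (l @ t)))
     = (\<Sum>m<length t. F (s, l @ take (Suc m) t) * y (tgt Q (t ! m), drop (Suc m) t))"
    by (rule sum.cong) (auto simp: path_end_def last_take_Suc last_append)
  finally show ?thesis .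
qed

lemma L1:
  "pa_mult Q F y (s, u @ l) = (\<Sum>k<length u. F (s, take k u) * y (path_end Q (s, take k u), drop k u @ l))
     + (\<Sum>k\<le>length l. F (s, u @ take k l) * y (path_end Q (s, u @ take k l), drop k l))"
proof -
  have "pa_mult Q F y (s, u @ l) = (\<Sum>k\<le>length u + length l.
      F (s, take k (u @ l)) * y (path_end Q (s, take k (u @ l)), drop k (u @ l)))"
    by (simp add: pa_mult_def)
  also have "\<dots> = (\<Sum>k<length u. F (s, take k (u @ l)) * y (path_end Q (s, take k (u @ l)), drop k (u @ l)))
     + (\<Sum>k\<le>length l. F (s, take (length u + k) (u @ l)) * y (path_end Q (s, take (length u + k) (u @ l)), drop (length u + k) (u @ l)))"
    by (rule sum_split_lt_le)
  also have "(\<Sum>k<length u. F (s, take k (u @ l)) * y (path_end Q (s, take k (u @ l)), drop k (u @ l)))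
     = (\<Sum>k<length u. F (s, take k u) * y (path_end Q (s, take k u), drop k u @ l))"
    by (rule sum.cong) auto
  finally show ?thesis by simp
qed

lemma pe_comp: "path_end Q (path_end Q (s, take k l), drop k l) = path_end Q (s, l)"
  by (auto simp: path_end_def)

definition unitE :: "('v, 'e) quiver \<Rightarrow> ('v, 'e, 'k::field) pelem" where
  "unitE Q = (\<lambda>p. if snd p = [] \<and> fst p \<in> verts Q then 1 else 0)"

lemma unit_right:
  assumes "\<forall>p. g p \<noteq> 0 \<longrightarrow> path_end Q p \<in> verts Q"
  shows "pa_mult Q g (unitE Q) = g"
proof
  fix p :: "('a, 'b) qpath"
  obtain s l where p: "p = (s, l)" by fastforce
  have "pa_mult Q g (unitE Q) p = (\<Sum>k\<in>{length l}. g (s, take k l) * unitE Q (path_end Q (s, take k l), drop k l))"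
    unfolding pa_mult_def p fst_conv snd_conv
    by (rule sum.mono_neutral_right) (auto simp: unitE_def)
  also have "\<dots> = g p" using assms by (auto simp: unitE_def p)
  finally show "pa_mult Q g (unitE Q) p = g p" .
qed

lemma unit_left:
  assumes "\<forall>p. g p \<noteq> 0 \<longrightarrow> fst p \<in> verts Q"
  shows "pa_mult Q (unitE Q) g = g"
proof
  fix p :: "('a, 'b) qpath"
  obtain s l where p: "p = (s, l)" by fastforce
  have "pa_mult Q (unitE Q) g p = (\<Sum>k\<in>{0}. unitE Q (s, take k l) * g (path_end Q (s, take k l), drop k l))"
    unfolding pa_mult_def p fst_conv snd_conv
    by (rule sum.mono_neutral_right) (auto simp: unitE_def)
  also have "\<dots> = g p" using assms by (auto simp: unitE_def p path_end_def)
  finally show "pa_mult Q (unitE Q) g p = g p" .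
qed

lemma unit_carrier:
  fixes Q :: "('v, 'e) quiver"
  assumes f: "finite (verts Q)"
  shows "(unitE Q :: ('v, 'e, 'k::field) pelem) \<in> pa_carrier Q"
proof -
  have "{p. unitE Q p \<noteq> (0::'k)} \<subseteq> (\<lambda>v. (v, [])) ` verts Q"
    by (auto simp: unitE_def)
  then have "finite {p. unitE Q p \<noteq> (0::'k)}" using f finite_subset by blast
  moreover have "\<forall>p. unitE Q p \<noteq> (0::'k) \<longrightarrow> is_path Q p"
    by (auto simp: unitE_def is_path_def)
  ultimately show ?thesis by (simp add: pa_carrier_def)
qed

lemma is_path_prefix: "is_path Q (s, l @ t) \<Longrightarrow> is_path Q (s, l)"
proof -
  assume a: "is_path Q (s, l @ t)"
  have "\<And>i. Suc i < length l \<Longrightarrow> tgt Q (l ! i) = src Q (l ! Suc i)"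
  proof -
    fix i assume i: "Suc i < length l"
    then have "tgt Q ((l @ t) ! i) = src Q ((l @ t) ! Suc i)" using a by (auto simp: is_path_def)
    then show "tgt Q (l ! i) = src Q (l ! Suc i)" using i by (simp add: nth_append)
  qed
  then show ?thesis using a by (auto simp: is_path_def)
qed

lemma is_path_suffix:
  assumes "is_path Q (s, u @ l)" "u \<noteq> []" "tgt Q (last u) \<in> verts Q"
  shows "is_path Q (tgt Q (last u), l)"
proof -
  have c: "\<And>i. Suc i < length (u @ l) \<Longrightarrow> tgt Q ((u @ l) ! i) = src Q ((u @ l) ! Suc i)"
    using assms(1) by (auto simp: is_path_def)
  have "l \<noteq> [] \<Longrightarrow> src Q (hd l) = tgt Q (last u)"
  proof -
    assume l: "l \<noteq> []"
    have "tgt Q ((u @ l) ! (length u - 1)) = src Q ((u @ l) ! Suc (length u - 1))"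
      using l assms(2) by (intro c) (cases l; auto)
    then show ?thesis using assms(2) l
      by (auto simp: nth_append last_conv_nth hd_conv_nth)
  qed
  moreover have "\<And>i. Suc i < length l \<Longrightarrow> tgt Q (l ! i) = src Q (l ! Suc i)"
  proof -
    fix i assume "Suc i < length l"
    then have "tgt Q ((u @ l) ! (length u + i)) = src Q ((u @ l) ! Suc (length u + i))"
      by (intro c) auto
    then show "tgt Q (l ! i) = src Q (l ! Suc i)" by (simp add: nth_append)
  qed
  ultimately show ?thesis using assms by (auto simp: is_path_def)
qed

lemma path_end_in: "(\<forall>a\<in>arrs Q. tgt Q a \<in> verts Q) \<Longrightarrow> is_path Q p \<Longrightarrow> path_end Q p \<in> verts Q"
  unfolding path_end_def is_path_def by (metis last_in_set subset_iff)

lemma rstrip_carrier: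
  assumes "y \<in> pa_carrier Q" shows "rstrip t y \<in> pa_carrier Q"
proof -
  have eq: "{r. rstrip t y r \<noteq> 0} = (\<lambda>r. (fst r, snd r @ t)) -` {p. y p \<noteq> 0}"
    by (simp add: rstrip_def vimage_def)
  have inj: "inj (\<lambda>r::('a,'b) qpath. (fst r, snd r @ t))"
    by (rule injI) (simp add: prod_eq_iff)
  have fin: "finite {p. y p \<noteq> 0}" using assms by (simp add: pa_carrier_def)
  have "finite {r. rstrip t y r \<noteq> 0}"
    unfolding eq by (rule finite_vimageI[OF fin inj])
  moreover have "\<forall>r. rstrip t y r \<noteq> 0 \<longrightarrow> is_path Q r"
  proof (intro allI impI)
    fix r assume "rstrip t y r \<noteq> 0"
    then have "y (fst r, snd r @ t) \<noteq> 0" by (simp add: rstrip_def)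
    then have "is_path Q (fst r, snd r @ t)" using assms by (simp add: pa_carrier_def)
    then have "is_path Q (fst r, snd r)" by (rule is_path_prefix)
    then show "is_path Q r" by simp
  qed
  ultimately show ?thesis by (simp add: pa_carrier_def)
qed

lemma lstrip_carrier:
  assumes "y \<in> pa_carrier Q" "u \<noteq> []" "V = tgt Q (last u)" "V \<in> verts Q"
  shows "lstrip V s0 u y \<in> pa_carrier Q"
proof -
  let ?h = "\<lambda>r::('a,'b) qpath. (s0, u @ snd r)"
  let ?X = "{r. lstrip V s0 u y r \<noteq> 0}"
  have "?h ` ?X \<subseteq> {p. y p \<noteq> 0}" by (auto simp: lstrip_def split: if_splits)
  then have "finite (?h ` ?X)" using assms(1) finite_subset by (auto simp: pa_carrier_def)
  moreover have "inj_on ?h ?X" by (auto simp: inj_on_def lstrip_def prod_eq_iff split: if_splits)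
  ultimately have "finite ?X" using finite_imageD by blast
  moreover have "\<forall>r. lstrip V s0 u y r \<noteq> 0 \<longrightarrow> is_path Q r"
  proof (intro allI impI)
    fix r assume "lstrip V s0 u y r \<noteq> 0"
    then have "fst r = V" "y (s0, u @ snd r) \<noteq> 0" by (auto simp: lstrip_def split: if_splits)
    then have "is_path Q (s0, u @ snd r)" using assms(1) by (auto simp: pa_carrier_def)
    then have "is_path Q (V, snd r)" using is_path_suffix assms by metis
    then show "is_path Q r" using \<open>fst r = V\<close> by (metis prod.collapse)
  qed
  ultimately show ?thesis by (simp add: pa_carrier_def)
qed

lemma S_verts_finite:
  assumes "finite_quiver Q"
  shows "finite (verts (stretched_quiver Q A))"
proof -
  have sub: "{New a j | a j. a \<in> arrs Q \<and> 1 \<le> j \<and> j \<le> A - 1} \<subseteq> (\<lambda>(a, j). New a j) ` (arrs Q \<times> {..A})"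
    by auto
  moreover have "finite (arrs Q)" "finite (verts Q)" using assms by (auto simp: finite_quiver_def)
  ultimately have "finite {New a j | a j. a \<in> arrs Q \<and> 1 \<le> j \<and> j \<le> A - 1}"
  proof -
    have "finite (arrs Q \<times> {..A})" using \<open>finite (arrs Q)\<close> by simp
    then have "finite ((\<lambda>(a, j). New a j) ` (arrs Q \<times> {..A}))" by (rule finite_imageI)
    then show ?thesis using sub by (rule finite_subset[rotated])
  qed
  then show ?thesis unfolding stretched_quiver_def using \<open>finite (verts Q)\<close> by simp
qed

lemma S_tgt_in:
  assumes "finite_quiver Q" "b \<in> arrs (stretched_quiver Q A)"
  shows "tgt (stretched_quiver Q A) b \<in> verts (stretched_quiver Q A)"
  using assms by (auto simp: stretched_quiver_def finite_quiver_def)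

lemma stretch_len: "length (snd (stretch_path A p)) = A * length (snd p)"
  by (induction "snd p" arbitrary: p) (auto simp: stretch_path_def stretch_arr_def)

lemma stretch_last:
  assumes "snd p \<noteq> []" "A \<ge> 1"
  shows "last (snd (stretch_path A p)) = (last (snd p), A)"
proof -
  obtain l b where "snd p = l @ [b]" using assms(1) by (metis append_butlast_last_id)
  then show ?thesis using assms(2)
    by (simp add: stretch_path_def stretch_arr_def)
qed

lemma theta_nz:
  "theta Q A g q \<noteq> 0 \<Longrightarrow> \<exists>p. is_path Q p \<and> stretch_path A p = q \<and> g p \<noteq> 0"
  unfolding theta_def by (metis (mono_tags, lifting) mem_Collect_eq sum.not_neutral_contains_not_neutral)

definition inv_ok :: "(('v, 'e) svert, 'e \<times> nat) quiver \<Rightarrow> nat \<Rightarrow> (('v, 'e) svert, 'e \<times> nat, 'k::field) pelem \<Rightarrow> bool" where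
  "inv_ok S A f \<longleftrightarrow> (\<forall>p. length (snd p) < A \<longrightarrow> f p = 0) \<and>
     (\<forall>p. f p \<noteq> 0 \<longrightarrow> fst p \<in> verts S \<and> path_end S p \<in> verts S)"

lemma mult_nz:
  assumes "pa_mult Q F y p \<noteq> 0"
  shows "\<exists>k\<le>length (snd p). F (fst p, take k (snd p)) \<noteq> 0 \<and>
           y (path_end Q (fst p, take k (snd p)), drop k (snd p)) \<noteq> 0"
proof -
  obtain k where "k \<in> {..length (snd p)}"
    "F (fst p, take k (snd p)) * y (path_end Q (fst p, take k (snd p)), drop k (snd p)) \<noteq> 0"
    using assms unfolding pa_mult_def by (meson sum.not_neutral_contains_not_neutral)
  then show ?thesis by auto
qed

lemma inv_theta:
  assumes fq: "finite_quiver Q" and A: "A \<ge> 1"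
    and g: "g \<in> pa_carrier Q" "\<forall>p. length (snd p) < 2 \<longrightarrow> g p = 0"
  shows "inv_ok (stretched_quiver Q A) A (theta Q A g)"
  unfolding inv_ok_def
proof (intro conjI allI impI)
  fix q :: "(('a, 'b) svert, 'b \<times> nat) qpath"
  assume "length (snd q) < A"
  show "theta Q A g q = 0"
  proof (rule ccontr)
    assume "theta Q A g q \<noteq> 0"
    then obtain p where p: "is_path Q p" "stretch_path A p = q" "g p \<noteq> 0" using theta_nz by blast
    then have "length (snd p) \<ge> 2" using g(2) by (meson not_le)
    then have "length (snd q) \<ge> A" using stretch_len[of A p] p(2) by (simp add: mult_le_mono2[of 1, simplified])
    then show False using \<open>length (snd q) < A\<close> by simp
  qed
next
  fix q :: "(('a, 'b) svert, 'b \<times> nat) qpath"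
  assume "theta Q A g q \<noteq> 0"
  then obtain p where p: "is_path Q p" "stretch_path A p = q" "g p \<noteq> 0" using theta_nz by blast
  have fp: "fst p \<in> verts Q" using p(1) by (simp add: is_path_def)
  have fq': "fst q = Old (fst p)" using p(2) by (auto simp: stretch_path_def)
  then show "fst q \<in> verts (stretched_quiver Q A)" using fp by (simp add: stretched_quiver_def)
  show "path_end (stretched_quiver Q A) q \<in> verts (stretched_quiver Q A)"
  proof (cases "snd p = []")
    case True
    then have "snd q = []" using stretch_len[of A p] p(2) by simp
    then show ?thesis using fq' fp by (simp add: path_end_def stretched_quiver_def)
  next
    case False
    then have "last (snd q) = (last (snd p), A)" using stretch_last[OF False A] p(2) by simp
    moreover have "snd q \<noteq> []" using stretch_len[of A p] p(2) False A by auto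
    moreover have "last (snd p) \<in> arrs Q" using p(1) False by (auto simp: is_path_def)
    ultimately show ?thesis using fq by (auto simp: path_end_def stretched_quiver_def finite_quiver_def)
  qed
qed

lemma inv_mult:
  assumes fq: "finite_quiver Q"
    and a: "inv_ok (stretched_quiver Q A) A a"
    and x: "x \<in> pa_carrier (stretched_quiver Q A)" and y: "y \<in> pa_carrier (stretched_quiver Q A)"
  shows "inv_ok (stretched_quiver Q A) A
           (pa_mult (stretched_quiver Q A) (pa_mult (stretched_quiver Q A) x a) y)"
  unfolding inv_ok_def
proof (intro conjI allI impI)
  let ?S = "stretched_quiver Q A"
  fix p :: "(('a, 'b) svert, 'b \<times> nat) qpath"
  assume len: "length (snd p) < A"
  show "pa_mult ?S (pa_mult ?S x a) y p = 0"
  proof (rule ccontr)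
    assume "pa_mult ?S (pa_mult ?S x a) y p \<noteq> 0"
    then obtain k where kk: "pa_mult ?S x a (fst p, take k (snd p)) \<noteq> 0" using mult_nz by blast
    obtain j where "a (path_end ?S (fst p, take j (take k (snd p))), drop j (take k (snd p))) \<noteq> 0"
      using mult_nz[OF kk] by auto
    moreover have "length (drop j (take k (snd p))) < A" using len by simp
    ultimately show False using a unfolding inv_ok_def by (metis snd_conv)
  qed
next
  let ?S = "stretched_quiver Q A"
  fix p :: "(('a, 'b) svert, 'b \<times> nat) qpath"
  assume "pa_mult ?S (pa_mult ?S x a) y p \<noteq> 0"
  then obtain k where k: "pa_mult ?S x a (fst p, take k (snd p)) \<noteq> 0"
      "y (path_end ?S (fst p, take k (snd p)), drop k (snd p)) \<noteq> 0" using mult_nz by blast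
  obtain j where "x (fst p, take j (take k (snd p))) \<noteq> 0"
    using mult_nz[OF k(1)] by auto
  then have "is_path ?S (fst p, take j (take k (snd p)))" using x by (simp add: pa_carrier_def)
  then show "fst p \<in> verts ?S" by (simp add: is_path_def)
  have ip: "is_path ?S (path_end ?S (fst p, take k (snd p)), drop k (snd p))" using k(2) y by (simp add: pa_carrier_def)
  have "path_end ?S (path_end ?S (fst p, take k (snd p)), drop k (snd p)) \<in> verts ?S"
  proof (rule path_end_in[OF _ ip])
    show "\<forall>b\<in>arrs ?S. tgt ?S b \<in> verts ?S" using S_tgt_in[OF fq] by blast
  qed
  then show "path_end ?S p \<in> verts ?S" using pe_comp by (metis prod.collapse)
qed

lemma inv_ideal:
  assumes fq: "finite_quiver Q" and A: "A \<ge> 1"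
    and G: "\<forall>g\<in>G. g \<in> pa_carrier Q \<and> (\<forall>p. length (snd p) < 2 \<longrightarrow> g p = 0)"
    and f: "f \<in> stretched_ideal Q A G"
  shows "inv_ok (stretched_quiver Q A) A f"
  using f unfolding stretched_ideal_def
proof (induction rule: gen_ideal.induct)
  case (gen s)
  then show ?case using inv_theta[OF fq A] G by blast
next
  case zero
  then show ?case by (simp add: inv_ok_def pa_zero_def)
next
  case (add a b)
  then show ?case by (auto simp: inv_ok_def pa_add_def) (metis add.right_neutral)+
next
  case (smult a c)
  then show ?case by (auto simp: inv_ok_def pa_smult_def)
next
  case (mult a x y)
  then show ?case using inv_mult[OF fq] by blast
qed

lemma RF:
  "rstrip t (pa_mult Q F y) = (\<lambda>r. pa_mult Q F (rstrip t y) r +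
     (\<Sum>m<length t. y (tgt Q (t ! m), drop (Suc m) t) * rstrip (take (Suc m) t) F r))"
proof
  fix r
  show "rstrip t (pa_mult Q F y) r = pa_mult Q F (rstrip t y) r +
     (\<Sum>m<length t. y (tgt Q (t ! m), drop (Suc m) t) * rstrip (take (Suc m) t) F r)"
    using R1[of Q F y "fst r" "snd r" t] by (simp add: rstrip_def mult.commute)
qed

lemma RX:
  assumes "\<forall>p. length (snd p) < length t \<longrightarrow> a p = 0"
  shows "rstrip t (pa_mult Q x a) = pa_mult Q x (rstrip t a)"
proof
  fix r
  have "(\<Sum>m<length t. x (fst r, snd r @ take (Suc m) t) * a (tgt Q (t ! m), drop (Suc m) t)) = 0"
    using assms by (intro sum.neutral) auto
  then show "rstrip t (pa_mult Q x a) r = pa_mult Q x (rstrip t a) r"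
    using R1[of Q x a "fst r" "snd r" t] by (simp add: rstrip_def)
qed

lemma LF:
  assumes "u \<noteq> []" "V = tgt Q (last u)" "\<forall>p. length (snd p) < length u \<longrightarrow> F p = 0"
  shows "lstrip V s0 u (pa_mult Q F y) = pa_mult Q (lstrip V s0 u F) y"
proof
  fix r
  show "lstrip V s0 u (pa_mult Q F y) r = pa_mult Q (lstrip V s0 u F) y r"
  proof (cases "fst r = V")
    case True
    have z: "(\<Sum>k<length u. F (s0, take k u) * y (path_end Q (s0, take k u), drop k u @ snd r)) = 0"
      using assms(3) by (intro sum.neutral) auto
    have "(\<Sum>k\<le>length (snd r). F (s0, u @ take k (snd r)) * y (path_end Q (s0, u @ take k (snd r)), drop k (snd r)))
        = pa_mult Q (lstrip V s0 u F) y r"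
      unfolding pa_mult_def lstrip_def using True assms(1,2)
      by (intro sum.cong) (auto simp: path_end_def last_append)
    then show ?thesis using L1[of Q F y s0 u "snd r"] z True by (simp add: lstrip_def)
  next
    case False
    then show ?thesis by (simp add: lstrip_def pa_mult_def)
  qed
qed

lemma LX:
  assumes "u \<noteq> []" "V = tgt Q (last u)"
  shows "lstrip V s0 u (pa_mult Q x a) = (\<lambda>r. pa_mult Q (lstrip V s0 u x) a r +
     (\<Sum>k<length u. x (s0, take k u) * lstrip V (path_end Q (s0, take k u)) (drop k u) a r))"
proof
  fix r
  show "lstrip V s0 u (pa_mult Q x a) r = pa_mult Q (lstrip V s0 u x) a r +
     (\<Sum>k<length u. x (s0, take k u) * lstrip V (path_end Q (s0, take k u)) (drop k u) a r)"
  proof (cases "fst r = V")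
    case True
    have "(\<Sum>k\<le>length (snd r). x (s0, u @ take k (snd r)) * a (path_end Q (s0, u @ take k (snd r)), drop k (snd r)))
        = pa_mult Q (lstrip V s0 u x) a r"
      unfolding pa_mult_def lstrip_def using True assms(1,2)
      by (intro sum.cong) (auto simp: path_end_def last_append)
    then show ?thesis using L1[of Q x a s0 u "snd r"] True by (simp add: lstrip_def)
  next
    case False
    then show ?thesis by (simp add: lstrip_def pa_mult_def)
  qed
qed

locale stc =
  fixes Q :: "('v, 'e) quiver" and A :: nat and G :: "('v, 'e, 'k::field) pelem set"
  assumes fq: "finite_quiver Q" and A1: "A \<ge> 1"
    and Gok: "\<forall>g\<in>G. g \<in> pa_carrier Q \<and> (\<forall>p. length (snd p) < 2 \<longrightarrow> g p = 0)"
begin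

abbreviation "S \<equiv> stretched_quiver Q A"
abbreviation "J \<equiv> stretched_ideal Q A G"

lemma J_inv: "f \<in> J \<Longrightarrow> inv_ok S A f"
  using inv_ideal[OF fq A1 Gok] by blast

lemma E_car: "(unitE S :: (('v, 'e) svert, 'e \<times> nat, 'k) pelem) \<in> pa_carrier S"
  by (rule unit_carrier[OF S_verts_finite[OF fq]])

lemma J_mult: "a \<in> J \<Longrightarrow> x \<in> pa_carrier S \<Longrightarrow> y \<in> pa_carrier S \<Longrightarrow> pa_mult S (pa_mult S x a) y \<in> J"
  unfolding stretched_ideal_def by (rule gen_ideal.mult)

lemma J_zero: "pa_zero \<in> J"
  unfolding stretched_ideal_def by (rule gen_ideal.zero)

lemma J_add: "a \<in> J \<Longrightarrow> b \<in> J \<Longrightarrow> (\<lambda>r. a r + b r) \<in> J"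
  unfolding stretched_ideal_def using gen_ideal.add[of a S _ b] by (simp add: pa_add_def)

lemma J_smult: "a \<in> J \<Longrightarrow> (\<lambda>r. c * a r) \<in> J"
  unfolding stretched_ideal_def using gen_ideal.smult[of a S _ c] by (simp add: pa_smult_def)

lemma J_sum: "(\<forall>k<(n::nat). F k \<in> J) \<Longrightarrow> (\<lambda>r. \<Sum>k<n. c k * F k r) \<in> J"
proof (induction n)
  case 0
  then show ?case using J_zero by (simp add: pa_zero_def)
next
  case (Suc n)
  then have "(\<lambda>r. (\<Sum>k<n. c k * F k r) + c n * F n r) \<in> J"
    using J_add[OF _ J_smult] by simp
  then show ?case by simp
qed

lemma CL:
  assumes x: "x \<in> pa_carrier S" and f: "f \<in> J"
  shows "pa_mult S x f \<in> J"
proof -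
  have "\<forall>p. pa_mult S x f p \<noteq> 0 \<longrightarrow> path_end S p \<in> verts S"
  proof (intro allI impI)
    fix p assume "pa_mult S x f p \<noteq> 0"
    then obtain k where "f (path_end S (fst p, take k (snd p)), drop k (snd p)) \<noteq> 0"
      using mult_nz by blast
    then have "path_end S (path_end S (fst p, take k (snd p)), drop k (snd p)) \<in> verts S"
      using J_inv[OF f] unfolding inv_ok_def by blast
    then show "path_end S p \<in> verts S" using pe_comp by (metis prod.collapse)
  qed
  then have "pa_mult S (pa_mult S x f) (unitE S) = pa_mult S x f" by (rule unit_right)
  moreover have "pa_mult S (pa_mult S x f) (unitE S) \<in> J" using J_mult[OF f x E_car] .
  ultimately show ?thesis by simp
qed

lemma CR:
  assumes f: "f \<in> J" and y: "y \<in> pa_carrier S"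
  shows "pa_mult S f y \<in> J"
proof -
  have "\<forall>p. f p \<noteq> 0 \<longrightarrow> fst p \<in> verts S" using J_inv[OF f] unfolding inv_ok_def by blast
  then have "pa_mult S (unitE S) f = f" by (rule unit_left)
  moreover have "pa_mult S (pa_mult S (unitE S) f) y \<in> J" using J_mult[OF f E_car y] .
  ultimately show ?thesis by simp
qed

end

definition sP :: "'e \<Rightarrow> nat \<Rightarrow> ('e \<times> nat) list" where
  "sP al i = map (\<lambda>j. (al, j)) [1..<i+1]"

definition sQ :: "nat \<Rightarrow> 'e \<Rightarrow> nat \<Rightarrow> ('e \<times> nat) list" where
  "sQ A al i = map (\<lambda>j. (al, j)) [i+1..<A+1]"

lemma sP_take: "m < i \<Longrightarrow> take (Suc m) (sP al i) = sP al (Suc m)"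
  by (simp add: sP_def take_map take_upt del: upt_Suc)

lemma sP_len: "length (sP al i) = i" by (simp add: sP_def del: upt_Suc)

lemma sP_last: "i \<ge> 1 \<Longrightarrow> last (sP al i) = (al, i)"
  by (simp add: sP_def last_map del: upt_Suc)

lemma sQ_len: "length (sQ A al i) = A - i" by (simp add: sQ_def del: upt_Suc)

lemma sQ_ne: "i < A \<Longrightarrow> sQ A al i \<noteq> []" by (simp add: sQ_def del: upt_Suc)

lemma sQ_last: "i < A \<Longrightarrow> last (sQ A al i) = (al, A)"
  by (simp add: sQ_def last_map del: upt_Suc)

lemma sQ_drop: "drop k (sQ A al i) = sQ A al (i + k)"
  by (simp add: sQ_def drop_map drop_upt add.assoc del: upt_Suc)

lemma sQ_nth: "k < A - i \<Longrightarrow> sQ A al i ! k = (al, i + 1 + k)"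
  by (simp add: sQ_def del: upt_Suc)

lemma tgtA: "tgt (stretched_quiver Q A) (al, A) = Old (tgt Q al)"
  by (simp add: stretched_quiver_def)

lemma sQ_pe:
  assumes "k < A - i"
  shows "path_end (stretched_quiver Q A) (New al i, take k (sQ A al i)) = New al (i + k)"
proof (cases k)
  case 0
  then show ?thesis by (simp add: path_end_def)
next
  case (Suc k')
  have "take k (sQ A al i) \<noteq> []" using assms Suc by (simp add: sQ_def del: upt_Suc)
  moreover have "last (take k (sQ A al i)) = (al, i + k)"
    using assms Suc last_take_Suc[of k' "sQ A al i"] sQ_nth[of k' A i al] by (simp add: sQ_len)
  ultimately show ?thesis using assms by (simp add: path_end_def stretched_quiver_def)
qed

lemma R0:
  assumes "1 \<le> i" "i < A"
  shows "rstrip (sP al i) (theta Q A g) = pa_zero"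
proof
  fix r
  show "rstrip (sP al i) (theta Q A g) r = pa_zero r"
  proof (rule ccontr)
    assume "rstrip (sP al i) (theta Q A g) r \<noteq> pa_zero r"
    then have "theta Q A g (fst r, snd r @ sP al i) \<noteq> 0" by (simp add: rstrip_def pa_zero_def)
    then obtain p where p: "stretch_path A p = (fst r, snd r @ sP al i)" using theta_nz by blast
    have ne: "snd r @ sP al i \<noteq> []" using assms sP_len[of al i] by auto
    have "snd p \<noteq> []"
    proof
      assume "snd p = []"
      then show False using stretch_len[of A p] p ne by simp
    qed
    then have "last (snd (stretch_path A p)) = (last (snd p), A)" 
    proof (rule stretch_last)
      show "A \<ge> 1" using assms by simp
    qed
    moreover have "last (snd r @ sP al i) = (al, i)" using sP_last assms sP_len[of al i]
      by (auto simp: last_append)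
    ultimately show False using p assms by simp
  qed
qed

lemma L0:
  fixes Q :: "('v, 'e) quiver" and g :: "('v, 'e, 'k::field) pelem"
  shows "lstrip V (New al i) u (theta Q A g) = pa_zero"
proof
  fix r :: "(('v, 'e) svert, 'e \<times> nat) qpath"
  have "theta Q A g (New al i, u @ snd r) = 0"
  proof (rule ccontr)
    assume "theta Q A g (New al i, u @ snd r) \<noteq> 0"
    from theta_nz[OF this] obtain p :: "('v, 'e) qpath" where "stretch_path A p = (New al i, u @ snd r)" by blast
    then show False by (simp add: stretch_path_def)
  qed
  then show "lstrip V (New al i) u (theta Q A g) r = pa_zero r" by (simp add: lstrip_def pa_zero_def)
qed

context stc begin

lemma V_in: "al \<in> arrs Q \<Longrightarrow> Old (tgt Q al) \<in> verts S"
  using fq by (auto simp: finite_quiver_def stretched_quiver_def)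

lemma main_strip:
  assumes al: "al \<in> arrs Q" and f: "f \<in> J"
  shows "\<forall>i. 1 \<le> i \<and> i < A \<longrightarrow> rstrip (sP al i) f \<in> J \<and>
            lstrip (Old (tgt Q al)) (New al i) (sQ A al i) f \<in> J"
  using f[unfolded stretched_ideal_def]
proof (induction rule: gen_ideal.induct)
  case (gen s)
  then obtain g where "s = theta Q A g" by blast
  show ?case
  proof (intro allI impI conjI)
    fix i assume i: "1 \<le> i \<and> i < A"
    show "rstrip (sP al i) s \<in> J" using R0[of i A al Q g] i J_zero \<open>s = theta Q A g\<close> by simp
    show "lstrip (Old (tgt Q al)) (New al i) (sQ A al i) s \<in> J"
      using L0[of "Old (tgt Q al)" al i "sQ A al i" Q A g] J_zero \<open>s = theta Q A g\<close> by simp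
  qed
next
  case zero
  have "rstrip t (pa_zero :: (('v, 'e) svert, 'e \<times> nat, 'k) pelem) = pa_zero"
       "lstrip V s0 t (pa_zero :: (('v, 'e) svert, 'e \<times> nat, 'k) pelem) = pa_zero"
     for t :: "('e \<times> nat) list" and V s0 :: "('v, 'e) svert"
    by (auto simp: rstrip_def lstrip_def pa_zero_def)
  then show ?case using J_zero by simp
next
  case (add a b)
  have "rstrip t (pa_add a b) = (\<lambda>r. rstrip t a r + rstrip t b r)"
       "lstrip V s0 t (pa_add a b) = (\<lambda>r. lstrip V s0 t a r + lstrip V s0 t b r)" for t and V s0 :: "('v, 'e) svert"
    by (auto simp: rstrip_def lstrip_def pa_add_def)
  then show ?case using add.IH J_add by simp
next
  case (smult a c)
  have "rstrip t (pa_smult c a) = (\<lambda>r. c * rstrip t a r)"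
       "lstrip V s0 t (pa_smult c a) = (\<lambda>r. c * lstrip V s0 t a r)" for t and V s0 :: "('v, 'e) svert"
    by (auto simp: rstrip_def lstrip_def pa_smult_def)
  then show ?case using smult.IH J_smult by simp
next
  case (mult a x y)
  have aJ: "a \<in> J" using mult.hyps(1) by (simp add: stretched_ideal_def)
  have ash: "\<forall>p. length (snd p) < A \<longrightarrow> a p = 0" using J_inv[OF aJ] by (simp add: inv_ok_def)
  have xaJ: "pa_mult S x a \<in> J" using CL[OF mult.hyps(2) aJ] .
  have xash: "\<forall>p. length (snd p) < A \<longrightarrow> pa_mult S x a p = 0" using J_inv[OF xaJ] by (simp add: inv_ok_def)
  show ?case
  proof (intro allI impI conjI)
    fix i assume i: "1 \<le> i \<and> i < A"
    let ?c = "\<lambda>m. y (tgt S (sP al i ! m), drop (Suc m) (sP al i))"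
    have "rstrip (sP al i) (pa_mult S (pa_mult S x a) y) = (\<lambda>r. pa_mult S (pa_mult S x a) (rstrip (sP al i) y) r +
       (\<Sum>m<length (sP al i). ?c m * rstrip (take (Suc m) (sP al i)) (pa_mult S x a) r))"
      by (rule RF)
    also have "\<dots> = (\<lambda>r. pa_mult S (pa_mult S x a) (rstrip (sP al i) y) r +
       (\<Sum>m<i. ?c m * pa_mult S x (rstrip (sP al (Suc m)) a) r))"
    proof -
      have "rstrip (take (Suc m) (sP al i)) (pa_mult S x a) = pa_mult S x (rstrip (sP al (Suc m)) a)"
        if "m < i" for m
      proof -
        have "rstrip (sP al (Suc m)) (pa_mult S x a) = pa_mult S x (rstrip (sP al (Suc m)) a)"
          using ash i that by (intro RX) (auto simp: sP_len)
        moreover have "take (Suc m) (sP al i) = sP al (Suc m)" using sP_take[OF that] .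
        ultimately show ?thesis by simp
      qed
      then show ?thesis by (simp add: sP_len)
    qed
    finally have eq: "rstrip (sP al i) (pa_mult S (pa_mult S x a) y) = \<dots>" .
    have t1: "pa_mult S (pa_mult S x a) (rstrip (sP al i) y) \<in> J"
      using J_mult[OF aJ mult.hyps(2) rstrip_carrier[OF mult.hyps(3)]] .
    have t2: "(\<lambda>r. \<Sum>m<i. ?c m * pa_mult S x (rstrip (sP al (Suc m)) a) r) \<in> J"
    proof (rule J_sum, intro allI impI)
      fix m assume "m < i"
      then have "rstrip (sP al (Suc m)) a \<in> J" using mult.IH i by auto
      then show "pa_mult S x (rstrip (sP al (Suc m)) a) \<in> J" using CL[OF mult.hyps(2)] by blast
    qed
    show "rstrip (sP al i) (pa_mult S (pa_mult S x a) y) \<in> J"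
      unfolding eq using J_add[OF t1 t2] .
  next
    fix i assume i: "1 \<le> i \<and> i < A"
    let ?V = "Old (tgt Q al)"
    let ?u = "sQ A al i"
    have iA: "i < A" using i by simp
    have une: "?u \<noteq> []" by (rule sQ_ne[OF iA])
    have Vu: "?V = tgt S (last ?u)" unfolding sQ_last[OF iA] tgtA ..
    have "lstrip ?V (New al i) ?u (pa_mult S (pa_mult S x a) y) = pa_mult S (lstrip ?V (New al i) ?u (pa_mult S x a)) y"
    proof (rule LF[OF une Vu])
      show "\<forall>p. length (snd p) < length ?u \<longrightarrow> pa_mult S x a p = 0"
        using xash unfolding sQ_len by simp
    qed
    moreover have "lstrip ?V (New al i) ?u (pa_mult S x a) \<in> J"
    proof -
      let ?c = "\<lambda>k. x (New al i, take k ?u)"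
      have "lstrip ?V (New al i) ?u (pa_mult S x a) = (\<lambda>r. pa_mult S (lstrip ?V (New al i) ?u x) a r +
         (\<Sum>k<length ?u. ?c k * lstrip ?V (path_end S (New al i, take k ?u)) (drop k ?u) a r))"
        by (rule LX[OF une Vu])
      also have "\<dots> = (\<lambda>r. pa_mult S (lstrip ?V (New al i) ?u x) a r +
         (\<Sum>k<A - i. ?c k * lstrip ?V (New al (i + k)) (sQ A al (i + k)) a r))"
      proof (rule ext)
        fix r
        have "(\<Sum>k<length ?u. ?c k * lstrip ?V (path_end S (New al i, take k ?u)) (drop k ?u) a r)
            = (\<Sum>k<A - i. ?c k * lstrip ?V (New al (i + k)) (sQ A al (i + k)) a r)"
          unfolding sQ_len by (rule sum.cong) (simp_all add: sQ_pe sQ_drop)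
        then show "pa_mult S (lstrip ?V (New al i) ?u x) a r +
         (\<Sum>k<length ?u. ?c k * lstrip ?V (path_end S (New al i, take k ?u)) (drop k ?u) a r) =
         pa_mult S (lstrip ?V (New al i) ?u x) a r +
         (\<Sum>k<A - i. ?c k * lstrip ?V (New al (i + k)) (sQ A al (i + k)) a r)" by simp
      qed
      finally have eq: "lstrip ?V (New al i) ?u (pa_mult S x a) = \<dots>" .
      have t1: "pa_mult S (lstrip ?V (New al i) ?u x) a \<in> J"
        using CL[OF lstrip_carrier[OF mult.hyps(2) une Vu V_in[OF al]] aJ] .
      have t2: "(\<lambda>r. \<Sum>k<A - i. ?c k * lstrip ?V (New al (i + k)) (sQ A al (i + k)) a r) \<in> J"
      proof (rule J_sum, intro allI impI)
        fix k assume "k < A - i"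
        then have "1 \<le> i + k \<and> i + k < A" using i by simp
        then show "lstrip ?V (New al (i + k)) (sQ A al (i + k)) a \<in> J" using mult.IH by blast
      qed
      show ?thesis unfolding eq using J_add[OF t1 t2] .
    qed
    ultimately show "lstrip ?V (New al i) ?u (pa_mult S (pa_mult S x a) y) \<in> J"
      using CR[OF _ mult.hyps(3)] by metis
  qed
qed

end

lemma fin1:
  fixes Q :: "('v, 'e) quiver" and x :: "('v, 'e, 'k::field) pelem"
  assumes "t \<noteq> []"
  shows "rstrip t (pa_mult Q x (pa_path (s, t))) = pa_mult Q x (pa_vtx s)"
proof -
  have a: "rstrip t (pa_path (s, t)) = (pa_vtx s :: ('v, 'e, 'k) pelem)"
    by (auto simp: rstrip_def pa_path_def pa_vtx_def prod_eq_iff)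
  have b: "(\<Sum>m<length t. (pa_path (s, t) :: ('v, 'e, 'k) pelem) (tgt Q (t ! m), drop (Suc m) t) * rstrip (take (Suc m) t) x r) = 0" for r
  proof (rule sum.neutral, intro ballI)
    fix m assume "m \<in> {..<length t}"
    then have "length (drop (Suc m) t) \<noteq> length t" by simp
    then have "drop (Suc m) t \<noteq> t" by metis
    then show "(pa_path (s, t) :: ('v, 'e, 'k) pelem) (tgt Q (t ! m), drop (Suc m) t) * rstrip (take (Suc m) t) x r = 0"
      by (simp add: pa_path_def)
  qed
  show ?thesis unfolding RF a using b by simp
qed

lemma vtx_left: "pa_mult Q (pa_vtx V) x r = (if fst r = V then x r else 0)"
proof -
  obtain s l where r: "r = (s, l)" by fastforce
  have "pa_mult Q (pa_vtx V) x r = (\<Sum>k\<in>{0}. pa_vtx V (s, take k l) * x (path_end Q (s, take k l), drop k l))"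
    unfolding pa_mult_def r fst_conv snd_conv
    by (rule sum.mono_neutral_right) (auto simp: pa_vtx_def pa_path_def)
  then show ?thesis by (simp add: r pa_vtx_def pa_path_def path_end_def)
qed

lemma fin2:
  assumes une: "u \<noteq> []" and Vu: "V = tgt Q (last u)"
  shows "lstrip V s0 u (pa_mult Q (pa_path (s0, u)) x) = pa_mult Q (pa_vtx V) x"
proof
  fix r
  show "lstrip V s0 u (pa_mult Q (pa_path (s0, u)) x) r = pa_mult Q (pa_vtx V) x r"
  proof (cases "fst r = V")
    case True
    have z: "(\<Sum>k<length u. pa_path (s0, u) (s0, take k u) * x (path_end Q (s0, take k u), drop k u @ snd r)) = 0"
      by (rule sum.neutral) (auto simp: pa_path_def)
    have "(\<Sum>k\<le>length (snd r). pa_path (s0, u) (s0, u @ take k (snd r)) * x (path_end Q (s0, u @ take k (snd r)), drop k (snd r)))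
       = (\<Sum>k\<in>{0}. pa_path (s0, u) (s0, u @ take k (snd r)) * x (path_end Q (s0, u @ take k (snd r)), drop k (snd r)))"
      by (rule sum.mono_neutral_right) (auto simp: pa_path_def)
    also have "\<dots> = x r" using True une Vu by (cases r) (simp add: pa_path_def path_end_def)
    finally show ?thesis using L1[of Q "pa_path (s0, u)" x s0 u "snd r"] z True
      by (simp add: lstrip_def vtx_left)
  next
    case False
    then show ?thesis by (simp add: lstrip_def vtx_left)
  qed
qed

theorem proposition1p10:
  fixes Q :: "('v, 'e) quiver" and A :: nat
    and G I :: "('v, 'e, 'k::field) pelem set"
    and w :: "('v, 'e) svert"
    and x :: "(('v, 'e) svert, 'e \<times> nat, 'k) pelem"
  assumes "finite_quiver Q"
    and "admissible Q I"
    and "fin_dim_quot Q I"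
    and "minimal_uniform_gens Q G I"
    and "A \<ge> 1"
    and "w \<in> verts (stretched_quiver Q A)" and "w \<notin> Old ` verts Q"
    and "x \<in> pa_carrier (stretched_quiver Q A)"
  shows "(pa_mult (stretched_quiver Q A) x (pa_vtx (fst (ptil Q A w)))
            \<notin> stretched_ideal Q A G
          \<longrightarrow> pa_mult (stretched_quiver Q A) x (pa_path (ptil Q A w))
            \<notin> stretched_ideal Q A G)
       \<and> (pa_mult (stretched_quiver Q A) (pa_vtx (path_end (stretched_quiver Q A) (qtil Q A w))) x
            \<notin> stretched_ideal Q A G
          \<longrightarrow> pa_mult (stretched_quiver Q A) (pa_path (qtil Q A w)) x
            \<notin> stretched_ideal Q A G)"
proof -
  have Gok: "\<forall>g\<in>G. g \<in> pa_carrier Q \<and> (\<forall>p. length (snd p) < 2 \<longrightarrow> g p = 0)"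
  proof
    fix g assume g: "g \<in> G"
    have "g \<in> I" using assms(4) g gen_ideal.gen[of g G Q] by (simp add: minimal_uniform_gens_def)
    then show "g \<in> pa_carrier Q \<and> (\<forall>p. length (snd p) < 2 \<longrightarrow> g p = 0)"
      using assms(2,4) g by (auto simp: admissible_def minimal_uniform_gens_def)
  qed
  interpret stc Q A G using assms(1,5) Gok by (unfold_locales) auto
  obtain al i where w: "w = New al i" and al: "al \<in> arrs Q" and i: "1 \<le> i" "i \<le> A - 1"
    using assms(6,7) by (auto simp: stretched_quiver_def)
  have iA: "i < A" using i assms(5) by simp
  have pt: "ptil Q A w = (Old (src Q al), sP al i)" by (simp add: w sP_def)
  have qt: "qtil Q A w = (New al i, sQ A al i)" by (simp add: w sQ_def)
  have une: "sQ A al i \<noteq> []" by (rule sQ_ne[OF iA])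
  have Vu: "Old (tgt Q al) = tgt S (last (sQ A al i))" unfolding sQ_last[OF iA] tgtA ..
  have pe: "path_end S (qtil Q A w) = Old (tgt Q al)"
    unfolding qt path_end_def using une Vu by simp
  have sPne: "sP al i \<noteq> []" using i by (simp add: sP_def)
  have ms: "f \<in> J \<Longrightarrow> rstrip (sP al i) f \<in> J \<and> lstrip (Old (tgt Q al)) (New al i) (sQ A al i) f \<in> J" for f
    using main_strip[OF al, of f] i iA by blast
  show ?thesis
  proof (intro conjI impI)
    assume "pa_mult S x (pa_vtx (fst (ptil Q A w))) \<notin> J"
    moreover
    {
      assume "pa_mult S x (pa_path (ptil Q A w)) \<in> J"
      then have "rstrip (sP al i) (pa_mult S x (pa_path (Old (src Q al), sP al i))) \<in> J"
        using ms pt by simp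
      then have "pa_mult S x (pa_vtx (fst (ptil Q A w))) \<in> J"
        unfolding fin1[OF sPne] pt by simp
    }
    ultimately show "pa_mult S x (pa_path (ptil Q A w)) \<notin> J" by blast
  next
    assume "pa_mult S (pa_vtx (path_end S (qtil Q A w))) x \<notin> J"
    moreover
    {
      assume "pa_mult S (pa_path (qtil Q A w)) x \<in> J"
      then have "lstrip (Old (tgt Q al)) (New al i) (sQ A al i) (pa_mult S (pa_path (New al i, sQ A al i)) x) \<in> J"
        using ms qt by simp
      then have "pa_mult S (pa_vtx (path_end S (qtil Q A w))) x \<in> J"
        unfolding fin2[OF une Vu] pe by simp
    }
    ultimately show "pa_mult S (pa_path (qtil Q A w)) x \<notin> J" by blast
  qed
qed

end
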